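(* With $d$, $k$, TT-cores $\mathcal{G}_i\in\mathbb{R}^{r_{i-1}\times n_i\times r_i}$ ($r_0=r_d=1$), CountSketch matrices $S_i\in\mathbb{R}^{m\times n_i}$ ($i\ne k$), and TensorSketch matrices $S_{<k}$, $S_{>k}$ as described in the context, the following hold (for $2\le k$ in the first identity and $k\le d-1$ in the second): $$FS_{<k}G_{<k}=\Big[(\mathcal{G}_1\times_2FS_1)\star(\mathcal{G}_2\times_2FS_2)\star\cdots\star(\mathcal{G}_{k-1}\times_2FS_{k-1})\Big]^{\mathrm{L}},$$ $$FS_{>k}G_{>k}^\top=\Big[\Big((\mathcal{G}_{k+1}\times_2FS_{k+1})\star(\mathcal{G}_{k+2}\times_2FS_{k+2})\star\cdots\star(\mathcal{G}_d\times_2FS_d)\Big)^{\mathrm{R}}\Big]^\top,$$ where $F\in\mathbb{C}^{m\times m}$ is the Fourier transform matrix and $^\top$ is the (non-conjugate) transpose.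
   Context: Notation: $[n]=\{1,\dots,n\}$. Index convention: a tuple $(i_1,\dots,i_p)\in[n_{j_1}]\times\cdots\times[n_{j_p}]$ is identified with $1+\sum_{s=1}^p(i_s-1)\prod_{t<s}n_{j_t}$. For $i\in[d]\setminus\{k\}$, $h_i:[n_i]\to[m]$, $v_i:[n_i]\to\{-1,1\}$ are arbitrary and $S_i\in\mathbb{R}^{m\times n_i}$ is the CountSketch matrix $S_i(j,l)=v_i(l)$ if $j=h_i(l)$, else $0$. $S_{<k}$ (resp. $S_{>k}$) is the TensorSketch matrix built from $\{(h_i,v_i)\}_{i<k}$ (resp. $i>k$): for a family $(h_{j_1},v_{j_1}),\dots,(h_{j_p},v_{j_p})$ it is $S(j,i)=v(i)$ if $j=h(i)$ and $0$ otherwise, where for $i\leftrightarrow(i_1,\dots,i_p)$, $h(i)=\big(\sum_s(h_{j_s}(i_s)-1)\bmod m\big)+1$ and $v(i)=\prod_s v_{j_s}(i_s)$. For $\mathcal{G}\in\mathbb{C}^{a\times n\times b}$, $\mathcal{G}(i)=\mathcal{G}(:,i,:)\in\mathbb{C}^{a\times b}$. $G_{<k}\in\mathbb{R}^{n_1\cdots n_{k-1}\times r_{k-1}}$ has row indexed by $(i_1,\dots,i_{k-1})$ equal to $\mathcal{G}_1(i_1)\cdots\mathcal{G}_{k-1}(i_{k-1})$; $G_{>k}\in\mathbb{R}^{r_k\times n_{k+1}\cdots n_d}$ has column indexed by $(i_{k+1},\dots,i_d)$ equal to $\mathcal{G}_{k+1}(i_{k+1})\cdots\mathcal{G}_d(i_d)$.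 Mode-2 product: for $\mathcal{G}\in\mathbb{C}^{a\times n\times b}$ and $M\in\mathbb{C}^{m\times n}$, $(\mathcal{G}\times_2M)(i_1,j,i_3)=\sum_{l=1}^n\mathcal{G}(i_1,l,i_3)M(j,l)$, a tensor of size $a\times m\times b$. Slice-wise product: for $\mathcal{A}\in\mathbb{C}^{r_1\times m\times r_2}$, $\mathcal{B}\in\mathbb{C}^{r_2\times m\times r_3}$, $\mathcal{A}\star\mathcal{B}\in\mathbb{C}^{r_1\times m\times r_3}$ with $(\mathcal{A}\star\mathcal{B})(i)=\mathcal{A}(i)\mathcal{B}(i)$ for all $i\in[m]$. Left unfolding of $\mathcal{A}\in\mathbb{C}^{n_1\times n_2\times n_3}$: $\mathcal{A}^{\mathrm L}\in\mathbb{C}^{n_1n_2\times n_3}$, $\mathcal{A}^{\mathrm L}(i_1+(i_2-1)n_1,i_3)=\mathcal{A}(i_1,i_2,i_3)$. Right unfolding: $\mathcal{A}^{\mathrm R}\in\mathbb{C}^{n_1\times n_2n_3}$, $\mathcal{A}^{\mathrm R}(i_1,i_2+(i_3-1)n_2)=\mathcal{A}(i_1,i_2,i_3)$. Fourier transform matrix: $F(s,j)=w^{(s-1)(j-1)}$, $w=e^{-\mathbf{i}2\pi/m}$. *)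

theory Defs
  imports Complex_Main
begin

text \<open>All matrices and 3-way tensors are represented as functions on natural-number
indices, using the paper's 1-based indexing; all sums range only over the stated
index ranges, so values outside the ranges are irrelevant.\<close>

type_synonym 'a mtx = "nat \<Rightarrow> nat \<Rightarrow> 'a"
type_synonym 'a tensor3 = "nat \<Rightarrow> nat \<Rightarrow> nat \<Rightarrow> 'a"

definition mmul :: "nat \<Rightarrow> 'a::comm_semiring_0 mtx \<Rightarrow> 'a mtx \<Rightarrow> 'a mtx" where
  "mmul p A B = (\<lambda>i j. \<Sum>l=1..p. A i l * B l j)"

definition mtranspose :: "'a mtx \<Rightarrow> 'a mtx" where
  "mtranspose A = (\<lambda>i j. A j i)"

definition fourier :: "nat \<Rightarrow> complex mtx" where
  "fourier m = (\<lambda>s j. (exp (- \<i> * complex_of_real (2 * pi / real m))) ^ ((s - 1) * (j - 1)))"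

definition countsketch :: "(nat \<Rightarrow> nat) \<Rightarrow> (nat \<Rightarrow> real) \<Rightarrow> real mtx" where
  "countsketch h v = (\<lambda>j l. if j = h l then v l else 0)"

text \<open>Index convention: a tuple (i_1,...,i_p) for the modes js = [j_1,...,j_p] is identified
with 1 + sum_s (i_s - 1) prod_{t<s} n_{j_t}.\<close>
definition index_of_tuple :: "(nat \<Rightarrow> nat) \<Rightarrow> nat list \<Rightarrow> nat list \<Rightarrow> nat" where
  "index_of_tuple n js ts =
     1 + (\<Sum>s<length js. (ts ! s - 1) * prod_list (map n (take s js)))"

definition tuple_of_index :: "(nat \<Rightarrow> nat) \<Rightarrow> nat list \<Rightarrow> nat \<Rightarrow> nat list" where
  "tuple_of_index n js i =
     map (\<lambda>s. ((i - 1) div prod_list (map n (take s js))) mod n (js ! s) + 1) [0..<length js]"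

definition tensorsketch ::
  "nat \<Rightarrow> (nat \<Rightarrow> nat \<Rightarrow> nat) \<Rightarrow> (nat \<Rightarrow> nat \<Rightarrow> real) \<Rightarrow> (nat \<Rightarrow> nat) \<Rightarrow> nat list \<Rightarrow> real mtx" where
  "tensorsketch m h v n js = (\<lambda>j i.
     (let p = zip js (tuple_of_index n js i) in
      if j = (sum_list (map (\<lambda>(a, b). h a b - 1) p)) mod m + 1
      then prod_list (map (\<lambda>(a, b). v a b) p) else 0))"

fun slice_chain :: "(nat \<Rightarrow> nat) \<Rightarrow> (nat \<Rightarrow> 'a::comm_semiring_0 tensor3) \<Rightarrow> (nat \<times> nat) list \<Rightarrow> 'a mtx" where
  "slice_chain r G [] = (\<lambda>a b. 0)"
| "slice_chain r G [(j, i)] = (\<lambda>a b. G j a i b)"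
| "slice_chain r G ((j, i) # p # ps) = mmul (r j) (\<lambda>a b. G j a i b) (slice_chain r G (p # ps))"

text \<open>G_{<k}: row indexed by (i_1,...,i_{k-1}) equals G_1(i_1)...G_{k-1}(i_{k-1}) (a 1 x r_{k-1} row).\<close>
definition G_lt :: "(nat \<Rightarrow> nat) \<Rightarrow> (nat \<Rightarrow> real tensor3) \<Rightarrow> (nat \<Rightarrow> nat) \<Rightarrow> nat \<Rightarrow> real mtx" where
  "G_lt r G n k = (\<lambda>i c. slice_chain r G (zip [1..<k] (tuple_of_index n [1..<k] i)) 1 c)"

text \<open>G_{>k}: column indexed by (i_{k+1},...,i_d) equals G_{k+1}(i_{k+1})...G_d(i_d) (an r_k x 1 column).\<close>
definition G_gt :: "(nat \<Rightarrow> nat) \<Rightarrow> (nat \<Rightarrow> real tensor3) \<Rightarrow> (nat \<Rightarrow> nat) \<Rightarrow> nat \<Rightarrow> nat \<Rightarrow> real mtx" where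
  "G_gt r G n k d = (\<lambda>c i. slice_chain r G (zip [k+1..<d+1] (tuple_of_index n [k+1..<d+1] i)) c 1)"

definition mode2 :: "nat \<Rightarrow> 'a::comm_semiring_0 tensor3 \<Rightarrow> 'a mtx \<Rightarrow> 'a tensor3" where
  "mode2 n T M = (\<lambda>i1 j i3. \<Sum>l=1..n. T i1 l i3 * M j l)"

definition slicewise :: "nat \<Rightarrow> 'a::comm_semiring_0 tensor3 \<Rightarrow> 'a tensor3 \<Rightarrow> 'a tensor3" where
  "slicewise p A B = (\<lambda>i1 i i3. \<Sum>c=1..p. A i1 i c * B c i i3)"

fun star_chain :: "(nat \<Rightarrow> nat) \<Rightarrow> (nat \<Rightarrow> 'a::comm_semiring_0 tensor3) \<Rightarrow> nat list \<Rightarrow> 'a tensor3" where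
  "star_chain r T [] = (\<lambda>a b c. 0)"
| "star_chain r T [j] = T j"
| "star_chain r T (j # j' # js) = slicewise (r j) (T j) (star_chain r T (j' # js))"

definition unfoldL :: "nat \<Rightarrow> 'a tensor3 \<Rightarrow> 'a mtx" where
  "unfoldL n1 A = (\<lambda>row col. A ((row - 1) mod n1 + 1) ((row - 1) div n1 + 1) col)"

definition unfoldR :: "nat \<Rightarrow> 'a tensor3 \<Rightarrow> 'a mtx" where
  "unfoldR n2 A = (\<lambda>row col. A row ((col - 1) mod n2 + 1) ((col - 1) div n2 + 1))"

end

theory Submission imports Defs begin
lemma sum_mod_div:
  fixes g :: "nat \<Rightarrow> nat \<Rightarrow> 'a::comm_monoid_add"
  assumes "0 < A"
  shows "(\<Sum>i<A*B. g (i mod A) (i div A)) = (\<Sum>b<B. \<Sum>a<A. g a b)"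
proof (induction B)
  case 0 then show ?case by simp
next
  case (Suc B)
  have "(\<Sum>i<A*Suc B. g (i mod A) (i div A)) = (\<Sum>i<A*B. g (i mod A) (i div A)) + (\<Sum>i\<in>{A*B..<A*B+A}. g (i mod A) (i div A))"
    by (simp add: lessThan_atLeast0 sum.atLeastLessThan_concat add.commute)
  also have "(\<Sum>i\<in>{A*B..<A*B+A}. g (i mod A) (i div A)) = (\<Sum>a<A. g a B)"
  proof -
    have "(\<Sum>i\<in>{A*B..<A*B+A}. g (i mod A) (i div A)) = (\<Sum>a\<in>{0..<A}. g ((a + A*B) mod A) ((a + A*B) div A))"
      using sum.shift_bounds_nat_ivl[of "\<lambda>i. g (i mod A) (i div A)" 0 "A*B" A] by (simp add: add.commute)
    also have "\<dots> = (\<Sum>a<A. g a B)"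
      using assms by (intro sum.cong) (auto simp: lessThan_atLeast0)
    finally show ?thesis .
  qed
  finally show ?case using Suc by simp
qed

lemma tuple_nil: "tuple_of_index n [] i = []"
  by (simp add: tuple_of_index_def)

lemma tuple_cons: "tuple_of_index n (j#js) i = ((i-1) mod n j + 1) # tuple_of_index n js ((i-1) div n j + 1)"
  by (simp add: tuple_of_index_def upt_conv_Cons map_Suc_upt[symmetric] div_mult2_eq del: upt_Suc)

lemma length_tuple[simp]: "length (tuple_of_index n js i) = length js"
  by (simp add: tuple_of_index_def)

lemma slice_chain_cons: "rest \<noteq> [] \<Longrightarrow> slice_chain r G ((j,i)#rest) = mmul (r j) (\<lambda>a b. G j a i b) (slice_chain r G rest)"
  by (cases rest) auto

lemma star_chain_cons: "js \<noteq> [] \<Longrightarrow> star_chain r T (j#js) = slicewise (r j) (T j) (star_chain r T js)"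
  by (cases js) auto

lemma main:
  fixes Gc :: "nat \<Rightarrow> complex tensor3" and \<phi> :: "nat \<Rightarrow> nat \<Rightarrow> nat \<Rightarrow> complex"
  assumes "js \<noteq> []" "\<forall>a\<in>set js. 1 \<le> n a"
  shows "\<forall>x y. (\<Sum>i<prod_list (map n js).
      prod_list (map (\<lambda>(a,t). \<phi> s a t) (zip js (tuple_of_index n js (Suc i))))
      * slice_chain r Gc (zip js (tuple_of_index n js (Suc i))) x y)
    = star_chain r (\<lambda>a x s y. \<Sum>l=1..n a. Gc a x l y * \<phi> s a l) js x s y"
  using assms
proof (induction js)
  case Nil then show ?case by simp
next
  case (Cons j js)
  have nj: "0 < n j" using Cons.prems by auto
  show ?case
  proof (cases "js = []")
    case True
    show ?thesis
    proof (intro allI)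
      fix x y
      have "(\<Sum>l=1..n j. Gc j x l y * \<phi> s j l) = (\<Sum>i<n j. Gc j x (Suc i) y * \<phi> s j (Suc i))"
        by (simp add: sum.atLeast1_atMost_eq)
      then show "(\<Sum>i<prod_list (map n (j#js)).
      prod_list (map (\<lambda>(a,t). \<phi> s a t) (zip (j#js) (tuple_of_index n (j#js) (Suc i))))
      * slice_chain r Gc (zip (j#js) (tuple_of_index n (j#js) (Suc i))) x y)
    = star_chain r (\<lambda>a x s y. \<Sum>l=1..n a. Gc a x l y * \<phi> s a l) (j#js) x s y"
        using True by (auto simp: tuple_cons tuple_nil mult.commute intro!: sum.cong)
    qed
  next
    case False
    define P where "P = prod_list (map n js)"
    define W where "W = (\<lambda>b. prod_list (map (\<lambda>(a,t). \<phi> s a t) (zip js (tuple_of_index n js (Suc b)))))"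
    define C where "C = (\<lambda>b. slice_chain r Gc (zip js (tuple_of_index n js (Suc b))))"
    have ne: "zip js (tuple_of_index n js i) \<noteq> []" for i
      using False by (cases js) (auto simp: tuple_cons)
    have IH: "\<forall>x y. (\<Sum>b<P. W b * C b x y) = star_chain r (\<lambda>a x s y. \<Sum>l=1..n a. Gc a x l y * \<phi> s a l) js x s y"
      using Cons False unfolding P_def W_def C_def by auto
    show ?thesis
    proof (intro allI)
      fix x y
      have "(\<Sum>i<prod_list (map n (j#js)).
      prod_list (map (\<lambda>(a,t). \<phi> s a t) (zip (j#js) (tuple_of_index n (j#js) (Suc i))))
      * slice_chain r Gc (zip (j#js) (tuple_of_index n (j#js) (Suc i))) x y)
        = (\<Sum>i<n j * P. (\<lambda>a b. \<phi> s j (Suc a) * W b * (\<Sum>c=1..r j. Gc j x (Suc a) c * C b c y)) (i mod n j) (i div n j))"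
        unfolding P_def
      proof (rule sum.cong, simp)
        fix i
        have t: "tuple_of_index n (j#js) (Suc i) = Suc (i mod n j) # tuple_of_index n js (Suc (i div n j))"
          by (simp add: tuple_cons)
        show "prod_list (map (\<lambda>(a,t). \<phi> s a t) (zip (j#js) (tuple_of_index n (j#js) (Suc i))))
      * slice_chain r Gc (zip (j#js) (tuple_of_index n (j#js) (Suc i))) x y = (\<lambda>a b. \<phi> s j (Suc a) * W b * (\<Sum>c=1..r j. Gc j x (Suc a) c * C b c y)) (i mod n j) (i div n j)"
          unfolding t W_def C_def using slice_chain_cons[OF ne, of r Gc j "Suc (i mod n j)" "Suc (i div n j)"]
          by (simp add: mmul_def)
      qed
      also have "\<dots> = (\<Sum>b<P. \<Sum>a<n j. \<phi> s j (Suc a) * W b * (\<Sum>c=1..r j. Gc j x (Suc a) c * C b c y))"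
        by (rule sum_mod_div[OF nj])
      also have "\<dots> = (\<Sum>c=1..r j. (\<Sum>a<n j. Gc j x (Suc a) c * \<phi> s j (Suc a)) * (\<Sum>b<P. W b * C b c y))"
      proof -
        have "(\<Sum>b<P. \<Sum>a<n j. \<phi> s j (Suc a) * W b * (\<Sum>c=1..r j. Gc j x (Suc a) c * C b c y))
          = (\<Sum>b<P. \<Sum>a<n j. \<Sum>c=1..r j. (Gc j x (Suc a) c * \<phi> s j (Suc a)) * (W b * C b c y))"
          by (simp add: sum_distrib_left mult.assoc mult.left_commute mult.commute)
        also have "\<dots> = (\<Sum>a<n j. \<Sum>b<P. \<Sum>c=1..r j. (Gc j x (Suc a) c * \<phi> s j (Suc a)) * (W b * C b c y))"
          by (rule sum.swap)
        also have "\<dots> = (\<Sum>a<n j. \<Sum>c=1..r j. \<Sum>b<P. (Gc j x (Suc a) c * \<phi> s j (Suc a)) * (W b * C b c y))"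
          by (intro sum.cong refl sum.swap)
        also have "\<dots> = (\<Sum>c=1..r j. \<Sum>a<n j. \<Sum>b<P. (Gc j x (Suc a) c * \<phi> s j (Suc a)) * (W b * C b c y))"
          by (rule sum.swap)
        also have "\<dots> = (\<Sum>c=1..r j. (\<Sum>a<n j. Gc j x (Suc a) c * \<phi> s j (Suc a)) * (\<Sum>b<P. W b * C b c y))"
          by (simp add: sum_product)
        finally show ?thesis .
      qed
      also have "\<dots> = (\<Sum>c=1..r j. (\<Sum>l=1..n j. Gc j x l c * \<phi> s j l) * star_chain r (\<lambda>a x s y. \<Sum>l=1..n a. Gc a x l y * \<phi> s a l) js c s y)"
        using IH by (simp add: sum.atLeast1_atMost_eq)
      also have "\<dots> = star_chain r (\<lambda>a x s y. \<Sum>l=1..n a. Gc a x l y * \<phi> s a l) (j#js) x s y"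
        using False by (simp add: star_chain_cons slicewise_def)
      finally show "(\<Sum>i<prod_list (map n (j#js)).
      prod_list (map (\<lambda>(a,t). \<phi> s a t) (zip (j#js) (tuple_of_index n (j#js) (Suc i))))
      * slice_chain r Gc (zip (j#js) (tuple_of_index n (j#js) (Suc i))) x y)
    = star_chain r (\<lambda>a x s y. \<Sum>l=1..n a. Gc a x l y * \<phi> s a l) (j#js) x s y" .
    qed
  qed
qed

definition omg :: "nat \<Rightarrow> complex" where
  "omg m = exp (- \<i> * complex_of_real (2 * pi / real m))"

lemma omg_pow_m: "1 \<le> m \<Longrightarrow> omg m ^ m = 1"
proof -
  assume m: "1 \<le> m"
  have "omg m ^ m = exp (of_nat m * (- \<i> * complex_of_real (2 * pi / real m)))"
    unfolding omg_def by (rule exp_of_nat_mult[symmetric])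
  also have "of_nat m * (- \<i> * complex_of_real (2 * pi / real m)) = - (2 * of_real pi * \<i>)"
    using m by (simp add: field_simps)
  also have "exp (- (2 * of_real pi * \<i>)) = 1"
    by (simp add: exp_minus)
  finally show ?thesis .
qed

lemma omg_pow_mod: "1 \<le> m \<Longrightarrow> omg m ^ (a mod m) = omg m ^ a"
proof -
  assume m: "1 \<le> m"
  have "omg m ^ a = omg m ^ (a mod m + m * (a div m))" by (metis mod_mult_div_eq)
  also have "\<dots> = omg m ^ (a mod m)"
    by (simp only: power_add power_mult omg_pow_m[OF m] power_one mult_1_right)
  finally show ?thesis by metis
qed

lemma pow_sum_list:
  "(w::complex) ^ (q * sum_list (map f p)) * complex_of_real (prod_list (map g p))
   = prod_list (map (\<lambda>x. w ^ (q * f x) * complex_of_real (g x)) p)"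
  by (induction p) (simp_all add: distrib_left power_add)

definition phi :: "nat \<Rightarrow> (nat \<Rightarrow> nat \<Rightarrow> nat) \<Rightarrow> (nat \<Rightarrow> nat \<Rightarrow> real) \<Rightarrow> nat \<Rightarrow> nat \<Rightarrow> nat \<Rightarrow> complex" where
  "phi m h v s a t = omg m ^ ((s - 1) * (h a t - 1)) * complex_of_real (v a t)"

lemma TS_eq:
  assumes m: "1 \<le> m"
  shows "mmul m (fourier m) (\<lambda>j i. complex_of_real (tensorsketch m h v n js j i)) s i
    = prod_list (map (\<lambda>(a,t). phi m h v s a t) (zip js (tuple_of_index n js i)))"
proof -
  define p where "p = zip js (tuple_of_index n js i)"
  define H where "H = sum_list (map (\<lambda>(a, b). h a b - 1) p)"
  define V where "V = prod_list (map (\<lambda>(a, b). v a b) p)"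
  have "mmul m (fourier m) (\<lambda>j i. complex_of_real (tensorsketch m h v n js j i)) s i
     = (\<Sum>j=1..m. if j = H mod m + 1 then fourier m s j * complex_of_real V else 0)"
    unfolding mmul_def tensorsketch_def Let_def p_def[symmetric] H_def[symmetric] V_def[symmetric]
    by (intro sum.cong refl) auto
  also have "\<dots> = fourier m s (H mod m + 1) * complex_of_real V"
  proof -
    have "H mod m + 1 \<in> {1..m}" using m by (simp add: Suc_leI)
    then show ?thesis by (simp only: sum.delta finite_atLeastAtMost) simp
  qed
  also have "fourier m s (H mod m + 1) = omg m ^ ((s - 1) * H)"
    unfolding fourier_def omg_def[symmetric]
    using omg_pow_mod[OF m, of "(s-1) * (H mod m)"] omg_pow_mod[OF m, of "(s-1) * H"]
    by (simp add: mod_mult_right_eq)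
  also have "omg m ^ ((s - 1) * H) * complex_of_real V
     = prod_list (map (\<lambda>(a,t). phi m h v s a t) p)"
    unfolding H_def V_def phi_def using pow_sum_list[of "omg m" "s - 1" "\<lambda>(a, b). h a b - 1" p "\<lambda>(a, b). v a b"]
    by (simp add: split_def)
  finally show ?thesis unfolding p_def .
qed

lemma FS_eq:
  assumes "h a l \<in> {1..m}"
  shows "mmul m (fourier m) (\<lambda>j l. complex_of_real (countsketch (h a) (v a) j l)) s l = phi m h v s a l"
proof -
  have "mmul m (fourier m) (\<lambda>j l. complex_of_real (countsketch (h a) (v a) j l)) s l
     = (\<Sum>j=1..m. if j = h a l then fourier m s j * complex_of_real (v a l) else 0)"
    unfolding mmul_def countsketch_def by (intro sum.cong refl) auto
  also have "\<dots> = fourier m s (h a l) * complex_of_real (v a l)"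
    using assms by (simp add: sum.delta)
  also have "\<dots> = phi m h v s a l"
    unfolding fourier_def phi_def omg_def by simp
  finally show ?thesis .
qed

lemma of_real_slice_chain:
  "complex_of_real (slice_chain r G p x y) = slice_chain r (\<lambda>i a l b. complex_of_real (G i a l b)) p x y"
  by (induction r G p arbitrary: x y rule: slice_chain.induct) (simp_all add: mmul_def)

lemma star_chain_cong:
  assumes "\<forall>a\<in>set js. \<forall>x y. T a x s y = T' a x s y"
  shows "star_chain r T js x s y = star_chain r T' js x s y"
  using assms
  by (induction r T js arbitrary: x y rule: star_chain.induct) (simp_all add: slicewise_def)

theorem theorem2:
  fixes d k m :: nat and n r :: "nat \<Rightarrow> nat"
    and G :: "nat \<Rightarrow> real tensor3"
    and h :: "nat \<Rightarrow> nat \<Rightarrow> nat" and v :: "nat \<Rightarrow> nat \<Rightarrow> real"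
  assumes k: "1 \<le> k" "k \<le> d"
    and m: "1 \<le> m"
    and n_pos: "\<forall>i\<in>{1..d}. 1 \<le> n i"
    and r_pos: "\<forall>i\<in>{0..d}. 1 \<le> r i"
    and r0: "r 0 = 1" and rd: "r d = 1"
    and hv: "\<forall>i\<in>{1..d} - {k}. \<forall>l\<in>{1..n i}. h i l \<in> {1..m} \<and> v i l \<in> {-1, 1}"
  defines "F \<equiv> fourier m"
    and "FS \<equiv> \<lambda>i. mmul m (fourier m) (\<lambda>j l. complex_of_real (countsketch (h i) (v i) j l))"
    and "Gc \<equiv> \<lambda>i a l b. complex_of_real (G i a l b)"
  shows
    "(2 \<le> k \<longrightarrow>
       (\<forall>s\<in>{1..m}. \<forall>c\<in>{1..r (k - 1)}.
          mmul (\<Prod>i\<in>{1..<k}. n i)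
               (mmul m F (\<lambda>j i. complex_of_real (tensorsketch m h v n [1..<k] j i)))
               (\<lambda>i c. complex_of_real (G_lt r G n k i c)) s c
          = unfoldL (r 0) (star_chain r (\<lambda>i. mode2 (n i) (Gc i) (FS i)) [1..<k]) s c))
     \<and> (k \<le> d - 1 \<longrightarrow>
       (\<forall>s\<in>{1..m}. \<forall>c\<in>{1..r k}.
          mmul (\<Prod>i\<in>{k+1..d}. n i)
               (mmul m F (\<lambda>j i. complex_of_real (tensorsketch m h v n [k+1..<d+1] j i)))
               (mtranspose (\<lambda>c i. complex_of_real (G_gt r G n k d c i))) s c
          = mtranspose (unfoldR m (star_chain r (\<lambda>i. mode2 (n i) (Gc i) (FS i)) [k+1..<d+1])) s c))"
proof -
  have Gc_eq: "Gc = (\<lambda>i a l b. complex_of_real (G i a l b))" using Gc_def by simp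
  define T' where "T' = (\<lambda>a x s y. \<Sum>l=1..n a. Gc a x l y * phi m h v s a l)"
  have modeeq: "mode2 (n a) (Gc a) (FS a) x s y = T' a x s y" if a: "a \<in> {1..d} - {k}" for a x s y
    unfolding mode2_def T'_def FS_def
  proof (rule sum.cong[OF refl])
    fix l assume l: "l \<in> {1..n a}"
    have "h a l \<in> {1..m}" using hv a l by blast
    then show "Gc a x l y * mmul m (fourier m) (\<lambda>j l. complex_of_real (countsketch (h a) (v a) j l)) s l
      = Gc a x l y * phi m h v s a l" by (simp add: FS_eq)
  qed
  have gen: "(\<Sum>i=1..prod_list (map n js). mmul m F (\<lambda>j i. complex_of_real (tensorsketch m h v n js j i)) s i
       * complex_of_real (slice_chain r G (zip js (tuple_of_index n js i)) x y))
     = star_chain r (\<lambda>i. mode2 (n i) (Gc i) (FS i)) js x s y"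
    if js: "js \<noteq> []" "set js \<subseteq> {1..d} - {k}" for js s x y
  proof -
    have npos: "\<forall>a\<in>set js. 1 \<le> n a" using js n_pos by auto
    have "(\<Sum>i=1..prod_list (map n js). mmul m F (\<lambda>j i. complex_of_real (tensorsketch m h v n js j i)) s i
       * complex_of_real (slice_chain r G (zip js (tuple_of_index n js i)) x y))
      = (\<Sum>i<prod_list (map n js). mmul m F (\<lambda>j i. complex_of_real (tensorsketch m h v n js j i)) s (Suc i)
       * complex_of_real (slice_chain r G (zip js (tuple_of_index n js (Suc i))) x y))"
      using sum.atLeast1_atMost_eq[of "\<lambda>i. mmul m F (\<lambda>j i. complex_of_real (tensorsketch m h v n js j i)) s i
       * complex_of_real (slice_chain r G (zip js (tuple_of_index n js i)) x y)"] by simp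
    also have "\<dots> = (\<Sum>i<prod_list (map n js).
      prod_list (map (\<lambda>(a,t). phi m h v s a t) (zip js (tuple_of_index n js (Suc i))))
      * slice_chain r Gc (zip js (tuple_of_index n js (Suc i))) x y)"
      unfolding F_def Gc_eq by (simp add: TS_eq[OF m] of_real_slice_chain)
    also have "\<dots> = star_chain r (\<lambda>a x s y. \<Sum>l=1..n a. Gc a x l y * phi m h v s a l) js x s y"
      using main[OF js(1) npos, of "phi m h v" s r Gc] by blast
    also have "\<dots> = star_chain r (\<lambda>i. mode2 (n i) (Gc i) (FS i)) js x s y"
      unfolding T'_def[symmetric]
    proof (rule star_chain_cong, intro ballI allI)
      fix a x y assume "a \<in> set js"
      then have "a \<in> {1..d} - {k}" using js by blast
      then show "T' a x s y = mode2 (n a) (Gc a) (FS a) x s y" using modeeq by simp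
    qed
    finally show ?thesis .
  qed
  show ?thesis
  proof (intro conjI impI ballI)
    fix s c assume k2: "2 \<le> k" and s: "s \<in> {1..m}" and c: "c \<in> {1..r (k - 1)}"
    have P: "(\<Prod>i\<in>{1..<k}. n i) = prod_list (map n [1..<k])"
      using prod.distinct_set_conv_list[of "[1..<k]" n] by simp
    have "mmul (\<Prod>i\<in>{1..<k}. n i)
               (mmul m F (\<lambda>j i. complex_of_real (tensorsketch m h v n [1..<k] j i)))
               (\<lambda>i c. complex_of_real (G_lt r G n k i c)) s c
        = star_chain r (\<lambda>i. mode2 (n i) (Gc i) (FS i)) [1..<k] 1 s c"
      unfolding P mmul_def[of "prod_list _"] G_lt_def
      by (rule gen) (use k2 k in auto)
    also have "\<dots> = unfoldL (r 0) (star_chain r (\<lambda>i. mode2 (n i) (Gc i) (FS i)) [1..<k]) s c"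
      using s r0 by (simp add: unfoldL_def)
    finally show "mmul (\<Prod>i\<in>{1..<k}. n i)
               (mmul m F (\<lambda>j i. complex_of_real (tensorsketch m h v n [1..<k] j i)))
               (\<lambda>i c. complex_of_real (G_lt r G n k i c)) s c
          = unfoldL (r 0) (star_chain r (\<lambda>i. mode2 (n i) (Gc i) (FS i)) [1..<k]) s c" .
  next
    fix s c assume kd: "k \<le> d - 1" and s: "s \<in> {1..m}" and c: "c \<in> {1..r k}"
    have P: "(\<Prod>i\<in>{k+1..d}. n i) = prod_list (map n [k+1..<d+1])"
    proof -
      have "set [k+1..<d+1] = {k+1..d}" by auto
      then show ?thesis by (metis distinct_upt prod.distinct_set_conv_list)
    qed
    have "mmul (\<Prod>i\<in>{k+1..d}. n i)
               (mmul m F (\<lambda>j i. complex_of_real (tensorsketch m h v n [k+1..<d+1] j i)))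
               (mtranspose (\<lambda>c i. complex_of_real (G_gt r G n k d c i))) s c
        = star_chain r (\<lambda>i. mode2 (n i) (Gc i) (FS i)) [k+1..<d+1] c s 1"
      unfolding P mmul_def[of "prod_list _"] G_gt_def mtranspose_def
      by (rule gen) (use kd k in auto)
    also have "\<dots> = mtranspose (unfoldR m (star_chain r (\<lambda>i. mode2 (n i) (Gc i) (FS i)) [k+1..<d+1])) s c"
    proof -
      have "(s - 1) mod m + 1 = s" "(s - 1) div m + 1 = 1" using s by auto
      then show ?thesis by (simp only: unfoldR_def mtranspose_def)
    qed
    finally show "mmul (\<Prod>i\<in>{k+1..d}. n i)
               (mmul m F (\<lambda>j i. complex_of_real (tensorsketch m h v n [k+1..<d+1] j i)))
               (mtranspose (\<lambda>c i. complex_of_real (G_gt r G n k d c i))) s c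
          = mtranspose (unfoldR m (star_chain r (\<lambda>i. mode2 (n i) (Gc i) (FS i)) [k+1..<d+1])) s c" .
  qed
qed

end
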